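(* Let $n\ge 2$, $k\ge 1$, $I=\{0,\ldots,n-1\}$. Let $\tilde S_n(k)$ be the set of bijections $u$ of $\mathbb{Z}/kn\mathbb{Z}$ such that $u(j+n)=u(j)+n$ for all $j\in\mathbb{Z}/kn\mathbb{Z}$ and $\sum_{i=1}^n u(i)\equiv\binom{n+1}{2}\pmod{kn}$. Then: (1) $\tilde S_n(k)$ is well defined, i.e. it is a group under composition; (2) the map $\varphi:\tilde S_n\to\tilde S_n(k)$, $\varphi([a_1,\ldots,a_n])=[a_1\bmod kn,\ldots,a_n\bmod kn]$ (i.e. $\varphi(u)(j\bmod kn)=u(j)\bmod kn$), is a homomorphism, and $\tilde S_n(k)$ is isomorphic to the quotient $\tilde S_n/\ker\varphi$; (3) with $N=\ker\varphi$, $N\cap K_{\{i\}}=\{e\}$ for every $i\in I$, where $K_{\{i\}}=\langle\tilde s_j:j\in I,\ j\ne i\rangle$; (4) $|\tilde S_n(k)|=k^{n-1}\,n!$.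
   Context: $\tilde S_n$ is the group (under composition) of all bijections $u:\mathbb{Z}\to\mathbb{Z}$ with $u(j+n)=u(j)+n$ for all $j$ and $\sum_{i=1}^n u(i)=\binom{n+1}{2}$, written $u=[u(1),\ldots,u(n)]$. Its generators are $\tilde s_i=[1,\ldots,i-1,i+1,i,i+2,\ldots,n]$ for $1\le i\le n-1$ and $\tilde s_0=[0,2,\ldots,n-1,n+1]$. Elements of $\tilde S_n(k)$ are likewise written $[u(1),\ldots,u(n)]$. *)

theory Defs
  imports "HOL-Algebra.Algebra"
begin

definition affS :: "nat \<Rightarrow> (int \<Rightarrow> int) monoid" where
  "affS n = \<lparr> carrier = {u. bij u \<and> (\<forall>j. u (j + int n) = u j + int n)
                  \<and> (\<Sum>i=1..int n. u i) = int ((n + 1) choose 2)},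
             monoid.mult = (\<lambda>u v. u \<circ> v),
             one = id \<rparr>"

text \<open>An element of Z/knZ is represented by
its residue in {0..<kn}; a map of Z/knZ is represented by a function int => int
which factors through reduction mod kn and takes values in {0..<kn}
(the latter follows from bij_betw together with the factorisation).\<close>
definition affSk :: "nat \<Rightarrow> nat \<Rightarrow> (int \<Rightarrow> int) monoid" where
  "affSk n k = \<lparr> carrier = {u. (\<forall>x. u x = u (x mod int (k * n)))
                  \<and> bij_betw u {0..<int (k * n)} {0..<int (k * n)}
                  \<and> (\<forall>j. u (j + int n) = (u j + int n) mod int (k * n))
                  \<and> (\<Sum>i=1..int n. u i) mod int (k * n) = int ((n + 1) choose 2) mod int (k * n)},
             monoid.mult = (\<lambda>u v. u \<circ> v),
             one = (\<lambda>x. x mod int (k * n)) \<rparr>"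

definition phiRed :: "nat \<Rightarrow> nat \<Rightarrow> (int \<Rightarrow> int) \<Rightarrow> (int \<Rightarrow> int)" where
  "phiRed n k u = (\<lambda>x. u x mod int (k * n))"

text \<open>For 1 <= i <= n-1 this is
[1,..,i+1,i,..,n], and for i = 0 it is [0,2,...,n-1,n+1].\<close>
definition sgen :: "nat \<Rightarrow> nat \<Rightarrow> int \<Rightarrow> int" where
  "sgen n i = (\<lambda>x. if x mod int n = int i mod int n then x + 1
                   else if x mod int n = (int i + 1) mod int n then x - 1
                   else x)"

definition Kpar :: "nat \<Rightarrow> nat \<Rightarrow> (int \<Rightarrow> int) set" where
  "Kpar n i = generate (affS n) {sgen n j | j. j < n \<and> j \<noteq> i}"

end

theory Submission
  imports Defs "HOL-Combinatorics.Permutations" "HOL-Library.FuncSet"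
begin


lemma sum_range_int: "(\<Sum>r\<in>{0..<int n}. r) = int (n choose 2)"
proof (induction n)
  case 0 then show ?case by simp
next
  case (Suc n)
  have "{0..<int (Suc n)} = insert (int n) {0..<int n}" by auto
  then have "(\<Sum>r\<in>{0..<int (Suc n)}. r) = int n + (\<Sum>r\<in>{0..<int n}. r)" by simp
  also have "\<dots> = int (Suc n choose 2)" using Suc by (simp add: numeral_2_eq_2)
  finally show ?case .
qed

lemma choose_Suc2: "int ((n + 1) choose 2) = int (n choose 2) + int n"
  by (simp add: numeral_2_eq_2)

definition "per N u \<longleftrightarrow> (\<forall>j. u (j + N) = u j + (N::int))"

lemma per_nat: "per N u \<Longrightarrow> u (j + N * int m) = u j + N * int m"
proof (induction m)
  case 0 then show ?case by simp
next
  case (Suc m)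
  have "u (j + N * int (Suc m)) = u ((j + N * int m) + N)" by (simp add: algebra_simps)
  also have "\<dots> = u (j + N * int m) + N" using Suc.prems unfolding per_def by blast
  finally show ?case using Suc by (simp add: algebra_simps)
qed

lemma per_int: assumes "per N u" shows "u (j + N * m) = u j + N * m"
proof (cases "m \<ge> 0")
  case True
  then show ?thesis using per_nat[OF assms, of j "nat m"] by simp
next
  case False
  have "u j = u ((j + N * m) + N * int (nat (- m)))" using False by simp
  also have "\<dots> = u (j + N * m) + N * int (nat (-m))" by (rule per_nat[OF assms])
  finally show ?thesis using False by simp
qed

lemma per_closed: assumes "per N u" shows "u j = u (j mod N) + N * (j div N)"
  using per_int[OF assms, of "j mod N" "j div N"] by (metis mod_mult_div_eq add.commute mult.commute)

lemma per_shift_sum: assumes "per N u" "N \<ge> 1"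
  shows "(\<Sum>i=1..N. u i) = (\<Sum>r\<in>{0..<N}. u r) + N"
proof -
  have a: "{1..N} = insert N {1..<N}" using assms(2) by auto
  have b: "{0..<N} = insert 0 {1..<N}" using assms(2) by auto
  have "u N = u 0 + N" using assms(1) unfolding per_def by (metis add_0)
  then show ?thesis unfolding a b by simp
qed


lemma modeq_form: "a mod (N::int) = b mod N \<Longrightarrow> b = a + N * ((b - a) div N)"
proof -
  assume "a mod (N::int) = b mod N"
  then have "N dvd b - a" by (metis mod_eq_dvd_iff)
  then show ?thesis by simp
qed

lemma small_mult_zero: "r \<in> {0..<N} \<Longrightarrow> r' \<in> {0..<(N::int)} \<Longrightarrow> r' = r + N * t \<Longrightarrow> t = 0"
proof (rule ccontr)
  assume a: "r \<in> {0..<N}" "r' \<in> {0..<(N::int)}" "r' = r + N * t" "t \<noteq> 0"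
  show False
  proof (cases "t > 0")
    case True then have "N * t \<ge> N * 1" using a by (intro mult_left_mono) auto
    then show False using a by auto
  next
    case False then have "N * t \<le> N * (-1)" using a by (intro mult_left_mono) auto
    then show False using a by auto
  qed
qed

lemma split_mult: "(N::int) * q = N * (q mod K) + (K*N) * (q div K)"
proof -
  have "N*q = N*(K*(q div K) + q mod K)" by (simp only: mult_div_mod_eq)
  also have "\<dots> = N * (q mod K) + (K*N) * (q div K)" by (simp only: distrib_left mult.assoc mult.left_commute add.commute)
  finally show ?thesis .
qed



lemma res_bij: assumes "inj u" "per N u" "N > 0"
  shows "bij_betw (\<lambda>r. u r mod N) {0..<N} {0..<N}"
proof -
  have inj: "inj_on (\<lambda>r. u r mod N) {0..<N}"
  proof (rule inj_onI)
    fix r r' assume r: "r \<in> {0..<N}" "r' \<in> {0..<N}" and e: "u r mod N = u r' mod N"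
    define t where "t = (u r' - u r) div N"
    have "u r' = u r + N * t" using modeq_form[OF e] unfolding t_def by simp
    also have "\<dots> = u (r + N * t)" using per_int[OF assms(2)] by simp
    finally have "r' = r + N * t" using assms(1) by (simp add: inj_eq)
    then have "t = 0" using r small_mult_zero by blast
    then show "r = r'" using \<open>r' = r + N * t\<close> by simp
  qed
  have "(\<lambda>r. u r mod N) ` {0..<N} \<subseteq> {0..<N}" using assms(3) by auto
  then have "(\<lambda>r. u r mod N) ` {0..<N} = {0..<N}" using endo_inj_surj[OF _ _ inj] by simp
  then show ?thesis using inj by (simp add: bij_betw_def)
qed

lemma sum_res: assumes "inj u" "per N u" "N > 0"
  shows "(\<Sum>r\<in>{0..<N}. u r mod N) = (\<Sum>r\<in>{0..<N}. r)"
  using sum.reindex_bij_betw[OF res_bij[OF assms], of "\<lambda>x. x"] by simp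

lemma sum_comp: assumes "inj u" "per N u" "inj v" "per N v" "N > 0"
  shows "(\<Sum>r\<in>{0..<N}. u (v r)) = (\<Sum>r\<in>{0..<N}. u r) + (\<Sum>r\<in>{0..<N}. v r) - (\<Sum>r\<in>{0..<N}. r)"
proof -
  have "(\<Sum>r\<in>{0..<N}. u (v r)) = (\<Sum>r\<in>{0..<N}. u (v r mod N) + N * (v r div N))"
  proof -
    have "\<And>r. u (v r) = u (v r mod N) + N * (v r div N)" using per_closed[OF assms(2)] by blast
    then show ?thesis by simp
  qed
  also have "\<dots> = (\<Sum>r\<in>{0..<N}. u (v r mod N)) + (\<Sum>r\<in>{0..<N}. N * (v r div N))"
    by (simp add: sum.distrib)
  also have "(\<Sum>r\<in>{0..<N}. u (v r mod N)) = (\<Sum>r\<in>{0..<N}. u r)"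
    using sum.reindex_bij_betw[OF res_bij[OF assms(3,4,5)], of u] by simp
  also have "(\<Sum>r\<in>{0..<N}. N * (v r div N)) = (\<Sum>r\<in>{0..<N}. v r - v r mod N)"
    by (rule sum.cong) (auto simp: minus_mod_eq_mult_div)
  also have "\<dots> = (\<Sum>r\<in>{0..<N}. v r) - (\<Sum>r\<in>{0..<N}. r)"
    using sum_res[OF assms(3,4,5)] by (simp add: sum_subtractf)
  finally show ?thesis by simp
qed



lemma affS_iff: assumes "n \<ge> 1"
  shows "u \<in> carrier (affS n) \<longleftrightarrow> bij u \<and> per (int n) u \<and> (\<Sum>r\<in>{0..<int n}. u r) = (\<Sum>r\<in>{0..<int n}. r)"
proof -
  have "per (int n) u \<Longrightarrow> (\<Sum>i=1..int n. u i) = (\<Sum>r\<in>{0..<int n}. u r) + int n"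
    using per_shift_sum[of "int n" u] assms by simp
  then show ?thesis unfolding affS_def per_def[symmetric] using sum_range_int[of n] choose_Suc2[of n]
    by auto
qed

lemma per_comp: "per N u \<Longrightarrow> per N v \<Longrightarrow> per N (u \<circ> v)"
  unfolding per_def by simp

lemma per_inv: assumes "bij u" "per N u" shows "per N (inv_into UNIV u)"
  unfolding per_def
proof
  fix j
  have "u (inv_into UNIV u j + N) = j + N" using assms unfolding per_def by (simp add: bij_is_surj surj_f_inv_f)
  then have "inv_into UNIV u (u (inv_into UNIV u j + N)) = inv_into UNIV u (j + N)" by simp
  then show "inv_into UNIV u (j + N) = inv_into UNIV u j + N" using assms(1) by (simp add: bij_is_inj inv_f_f)
qed

lemma affS_group: assumes "n \<ge> 1" shows "group (affS n)"
proof -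
  have N: "int n > 0" using assms by simp
  note iff = affS_iff[OF assms]
  show ?thesis
  proof (rule groupI)
    fix x y assume "x \<in> carrier (affS n)" "y \<in> carrier (affS n)"
    then show "x \<otimes>\<^bsub>affS n\<^esub> y \<in> carrier (affS n)"
      unfolding iff by (auto simp: affS_def bij_comp per_comp sum_comp[OF _ _ _ _ N] bij_is_inj)
  next
    show "\<one>\<^bsub>affS n\<^esub> \<in> carrier (affS n)" unfolding iff by (simp add: affS_def per_def)
  next
    fix x y z show "x \<otimes>\<^bsub>affS n\<^esub> y \<otimes>\<^bsub>affS n\<^esub> z = x \<otimes>\<^bsub>affS n\<^esub> (y \<otimes>\<^bsub>affS n\<^esub> z)"
      by (simp add: affS_def comp_assoc)
  next
    fix x show "\<one>\<^bsub>affS n\<^esub> \<otimes>\<^bsub>affS n\<^esub> x = x" by (simp add: affS_def)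
  next
    fix x assume x: "x \<in> carrier (affS n)"
    then have b: "bij x" "per (int n) x" "(\<Sum>r\<in>{0..<int n}. x r) = (\<Sum>r\<in>{0..<int n}. r)"
      unfolding iff by auto
    have bi: "bij (inv_into UNIV x)" "per (int n) (inv_into UNIV x)" using b bij_imp_bij_inv per_inv by auto
    have "(\<Sum>r\<in>{0..<int n}. x (inv_into UNIV x r)) = (\<Sum>r\<in>{0..<int n}. x r) + (\<Sum>r\<in>{0..<int n}. inv_into UNIV x r) - (\<Sum>r\<in>{0..<int n}. r)"
      using sum_comp[OF _ _ _ _ N] b bi bij_is_inj by blast
    moreover have "(\<Sum>r\<in>{0..<int n}. x (inv_into UNIV x r)) = (\<Sum>r\<in>{0..<int n}. r)"
      using b(1) by (simp add: bij_is_surj surj_f_inv_f)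
    ultimately have "(\<Sum>r\<in>{0..<int n}. inv_into UNIV x r) = (\<Sum>r\<in>{0..<int n}. r)" using b(3) by simp
    then have "inv_into UNIV x \<in> carrier (affS n)" unfolding iff using bi by simp
    moreover have "inv_into UNIV x \<otimes>\<^bsub>affS n\<^esub> x = \<one>\<^bsub>affS n\<^esub>"
      using b(1) by (simp add: affS_def bij_is_inj)
    ultimately show "\<exists>y\<in>carrier (affS n). y \<otimes>\<^bsub>affS n\<^esub> x = \<one>\<^bsub>affS n\<^esub>" by blast
  qed
qed



context
  fixes n k :: nat and w :: "int \<Rightarrow> int"
  assumes n1: "n \<ge> 1" and k1: "k \<ge> 1" and w: "w \<in> carrier (affSk n k)"
begin

lemma Wfac: "w x = w (x mod int (k*n))" using w by (simp add: affSk_def)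
lemma Wbij: "bij_betw w {0..<int (k*n)} {0..<int (k*n)}" using w by (simp add: affSk_def)
lemma Wper: "w (j + int n) = (w j + int n) mod int (k*n)" using w by (simp add: affSk_def)
lemma Wsumc: "(\<Sum>i=1..int n. w i) mod int (k*n) = int ((n + 1) choose 2) mod int (k*n)"
  using w by (simp add: affSk_def)

lemma Mpos: "int (k*n) > 0" using n1 k1 by simp

lemma Wrange: "w x \<in> {0..<int (k*n)}"
proof -
  have "x mod int (k*n) \<in> {0..<int (k*n)}" using Mpos by simp
  then show ?thesis using Wfac[of x] Wbij by (metis bij_betwE)
qed

lemma Wfac2: "w (a + int (k*n) * t) = w a"
proof -
  have "w (a + int (k*n) * t) = w ((a + int (k*n) * t) mod int (k*n))" by (rule Wfac)
  also have "\<dots> = w (a mod int (k*n))" by (simp only: mod_mult_self2)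
  also have "\<dots> = w a" by (rule Wfac[symmetric])
  finally show ?thesis .
qed

lemma Wmod: "w x mod int (k*n) = w x" using Wrange[of x] by (intro mod_pos_pos_trivial) auto

lemma Wnat: "w (x + int n * int q) = (w x + int n * int q) mod int (k*n)"
proof (induction q)
  case 0 then show ?case using Wmod[of x] by simp
next
  case (Suc q)
  have "w (x + int n * int (Suc q)) = w ((x + int n * int q) + int n)" by (simp add: algebra_simps)
  also have "\<dots> = (w (x + int n * int q) + int n) mod int (k*n)" by (rule Wper)
  also have "\<dots> = (w x + int n * int q + int n) mod int (k*n)" using Suc by (simp add: mod_add_left_eq)
  finally show ?case by (simp add: algebra_simps)
qed

lemma Wint: "w (x + int n * q) = (w x + int n * q) mod int (k*n)"
proof -
  have e: "int n * q = int n * (q mod int k) + int (k*n) * (q div int k)"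
    using split_mult[of "int n" q "int k"] by simp
  have "w (x + int n * q) = w ((x + int n * (q mod int k)) + int (k*n) * (q div int k))"
    using e by (simp add: algebra_simps)
  also have "\<dots> = w (x + int n * (q mod int k))" by (rule Wfac2)
  also have "\<dots> = w (x + int n * int (nat (q mod int k)))" using k1 by simp
  also have "\<dots> = (w x + int n * int (nat (q mod int k))) mod int (k*n)" by (rule Wnat)
  also have "\<dots> = (w x + int n * (q mod int k)) mod int (k*n)" using k1 by simp
  also have "\<dots> = ((w x + int n * (q mod int k)) + int (k*n) * (q div int k)) mod int (k*n)"
    by simp
  also have "\<dots> = (w x + int n * q) mod int (k*n)" using e by (simp add: algebra_simps)
  finally show ?thesis .
qed

lemma Wclosed: "w x = (w (x mod int n) + int n * (x div int n)) mod int (k*n)"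
  using Wint[of "x mod int n" "x div int n"] by simp

lemma Wres_bij: "bij_betw (\<lambda>r. w r mod int n) {0..<int n} {0..<int n}"
proof -
  have N: "int n > 0" using n1 by simp
  have inj: "inj_on (\<lambda>r. w r mod int n) {0..<int n}"
  proof (rule inj_onI)
    fix r r' assume r: "r \<in> {0..<int n}" "r' \<in> {0..<int n}" and e: "w r mod int n = w r' mod int n"
    define s where "s = (w r' - w r) div int n"
    have ws: "w r' = w r + int n * s" using modeq_form[OF e] unfolding s_def by simp
    define t where "t = s mod int k"
    have t: "t \<in> {0..<int k}" using k1 unfolding t_def by simp
    have "w (r + int n * t) = (w r + int n * t) mod int (k*n)" by (rule Wint)
    also have "\<dots> = (w r + int n * s) mod int (k*n)"
    proof -
      have "int n * s = int n * t + int (k*n) * (s div int k)" unfolding t_def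
        using split_mult[of "int n" s "int k"] by simp
      then have ee: "w r + int n * s = (w r + int n * t) + int (k*n) * (s div int k)" by simp
      show ?thesis by (simp only: ee mod_mult_self2)
    qed
    also have "\<dots> = w r'" using Wmod[of r'] unfolding ws[symmetric] .
    finally have eq: "w (r + int n * t) = w r'" .
    have in1: "r + int n * t \<in> {0..<int (k*n)}"
    proof -
      have "int n * t \<le> int n * (int k - 1)" using t N by (intro mult_left_mono) auto
      then show ?thesis using r t N by (auto simp: algebra_simps)
    qed
    have le: "int n * 1 \<le> int n * int k" using k1 by (intro mult_left_mono) auto
    have "r' < int n" using r(2) by simp
    then have "r' < int n * int k" using le by linarith
    then have in2: "r' \<in> {0..<int (k*n)}" using r(2) by (simp add: mult.commute)
    have "r' = r + int n * t" using eq Wbij in1 in2 unfolding bij_betw_def inj_on_def by metis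
    then have "t = 0" using r small_mult_zero by blast
    then show "r = r'" using \<open>r' = r + int n * t\<close> by simp
  qed
  have "(\<lambda>r. w r mod int n) ` {0..<int n} \<subseteq> {0..<int n}" using N by auto
  then have "(\<lambda>r. w r mod int n) ` {0..<int n} = {0..<int n}" using endo_inj_surj[OF _ _ inj] by simp
  then show ?thesis using inj by (simp add: bij_betw_def)
qed

lemma Wsum: "(\<Sum>r\<in>{0..<int n}. w r) mod int (k*n) = (\<Sum>r\<in>{0..<int n}. r) mod int (k*n)"
proof -
  define h where "h i = w (i mod int n) + int n * (i div int n)" for i
  have ph: "per (int n) h" unfolding per_def h_def using n1 by (simp add: distrib_left)
  have "(\<Sum>i=1..int n. w i) mod int (k*n) = (\<Sum>i=1..int n. h i mod int (k*n)) mod int (k*n)"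
  proof -
    have "\<And>i. w i = h i mod int (k*n)" unfolding h_def using Wclosed by blast
    then show ?thesis by simp
  qed
  also have "\<dots> = (\<Sum>i=1..int n. h i) mod int (k*n)" by (simp add: mod_sum_eq)
  also have "(\<Sum>i=1..int n. h i) = (\<Sum>r\<in>{0..<int n}. h r) + int n"
    using per_shift_sum[OF ph] n1 by simp
  also have "(\<Sum>r\<in>{0..<int n}. h r) = (\<Sum>r\<in>{0..<int n}. w r)"
    by (rule sum.cong) (auto simp: h_def)
  finally have a: "((\<Sum>r\<in>{0..<int n}. w r) + int n) mod int (k*n) = ((\<Sum>r\<in>{0..<int n}. r) + int n) mod int (k*n)"
    using Wsumc sum_range_int[of n] choose_Suc2[of n] by simp
  then show ?thesis unfolding mod_eq_dvd_iff by simp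
qed

end



context
  fixes n k :: nat
  assumes n1: "n \<ge> 1" and k1: "k \<ge> 1"
begin

lemma phi_mod: assumes "per (int n) u" shows "u y mod int (k*n) = u (y mod int (k*n)) mod int (k*n)"
proof -
  have e0: "y mod int (k*n) + int (k*n) * (y div int (k*n)) = y" by (rule mod_mult_div_eq)
  have e: "y = y mod int (k*n) + int n * (int k * (y div int (k*n)))"
    using e0 by (simp add: algebra_simps)
  have "u y = u (y mod int (k*n) + int n * (int k * (y div int (k*n))))" using e by simp
  also have "\<dots> = u (y mod int (k*n)) + int (k*n) * (y div int (k*n))"
    using per_int[OF assms, of "y mod int (k*n)" "int k * (y div int (k*n))"] by (simp add: algebra_simps)
  finally have "u y = u (y mod int (k*n)) + int (k*n) * (y div int (k*n))" .
  then show ?thesis by (simp only: mod_mult_self2)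
qed

lemma affS_parts: assumes "u \<in> carrier (affS n)"
  shows "bij u" "per (int n) u" "(\<Sum>r\<in>{0..<int n}. u r) = (\<Sum>r\<in>{0..<int n}. r)"
  using assms affS_iff[OF n1] by auto

lemma phi_in: assumes u: "u \<in> carrier (affS n)" shows "phiRed n k u \<in> carrier (affSk n k)"
proof -
  note p = affS_parts[OF u]
  have M: "int (k*n) > 0" using n1 k1 by simp
  have a: "\<forall>x. u x mod int (k*n) = u (x mod int (k*n)) mod int (k*n)" using phi_mod[OF p(2)] by blast
  have inj: "inj_on (\<lambda>x. u x mod int (k*n)) {0..<int (k*n)}"
  proof (rule inj_onI)
    fix x y assume xy: "x \<in> {0..<int (k*n)}" "y \<in> {0..<int (k*n)}"
      and e: "u x mod int (k*n) = u y mod int (k*n)"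
    define t where "t = (u y - u x) div int (k*n)"
    have "u y = u x + int (k*n) * t" using modeq_form[OF e] unfolding t_def by simp
    also have "\<dots> = u (x + int n * (int k * t))" using per_int[OF p(2), of x "int k * t"] by (simp add: algebra_simps)
    finally have "y = x + int (k*n) * t" using bij_is_inj[OF p(1)] by (simp add: inj_eq algebra_simps)
    then have "t = 0" using xy small_mult_zero by blast
    then show "x = y" using \<open>y = x + int (k*n) * t\<close> by simp
  qed
  have "(\<lambda>x. u x mod int (k*n)) ` {0..<int (k*n)} \<subseteq> {0..<int (k*n)}" using M by auto
  then have "(\<lambda>x. u x mod int (k*n)) ` {0..<int (k*n)} = {0..<int (k*n)}" using endo_inj_surj[OF _ _ inj] by simp
  then have b: "bij_betw (\<lambda>x. u x mod int (k*n)) {0..<int (k*n)} {0..<int (k*n)}" using inj by (simp add: bij_betw_def)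
  have c: "\<forall>j. u (j + int n) mod int (k*n) = (u j mod int (k*n) + int n) mod int (k*n)"
    using p(2) unfolding per_def by (simp add: mod_add_left_eq)
  have "(\<Sum>i=1..int n. u i) = int ((n + 1) choose 2)" using u by (simp add: affS_def)
  then have d: "(\<Sum>i=1..int n. u i mod int (k*n)) mod int (k*n) = int ((n + 1) choose 2) mod int (k*n)"
    by (simp add: mod_sum_eq)
  show ?thesis unfolding phiRed_def affSk_def using a b c d by simp
qed

lemma phi_comp: assumes "u \<in> carrier (affS n)" "v \<in> carrier (affS n)"
  shows "phiRed n k (u \<circ> v) = phiRed n k u \<circ> phiRed n k v"
proof
  fix x show "phiRed n k (u \<circ> v) x = (phiRed n k u \<circ> phiRed n k v) x"
    unfolding phiRed_def comp_def by (rule phi_mod[OF affS_parts(2)[OF assms(1)]])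
qed

lemma phi_one: "phiRed n k id = \<one>\<^bsub>affSk n k\<^esub>"
  by (simp add: phiRed_def affSk_def)

lemma phi_surj: assumes w: "w \<in> carrier (affSk n k)" shows "\<exists>u\<in>carrier (affS n). phiRed n k u = w"
proof -
  have N: "int n > 0" using n1 by simp
  define D where "D = (\<Sum>r\<in>{0..<int n}. r) - (\<Sum>r\<in>{0..<int n}. w r)"
  have MD: "int (k*n) dvd D" unfolding D_def using Wsum[OF n1 k1 w] by (simp add: mod_eq_dvd_iff dvd_diff_commute)
  have "int n dvd int (k*n)" by simp
  then have ND: "int n dvd D" using MD dvd_trans by blast
  define a where "a r = w r + (if r = 0 then D else 0)" for r
  define u where "u x = a (x mod int n) + int n * (x div int n)" for x
  have ares: "a r mod int n = w r mod int n" for r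
    using ND unfolding a_def by (auto simp: mod_add_right_eq[symmetric])
  have pu: "per (int n) u" unfolding per_def u_def using N by (simp add: distrib_left)
  note rb = Wres_bij[OF n1 k1 w]
  have umod: "u x mod int n = w (x mod int n) mod int n" for x
    unfolding u_def using ares by simp
  have inj: "inj u"
  proof (rule injI)
    fix x y assume e: "u x = u y"
    then have "w (x mod int n) mod int n = w (y mod int n) mod int n" using umod by metis
    then have m0: "(\<lambda>r. w r mod int n) (x mod int n) = (\<lambda>r. w r mod int n) (y mod int n)" by simp
    have xi: "x mod int n \<in> {0..<int n}" "y mod int n \<in> {0..<int n}" using N by auto
    have m: "x mod int n = y mod int n" using inj_onD[OF bij_betw_imp_inj_on[OF rb] m0 xi] .
    have m2: "int n * (x div int n) = int n * (y div int n)" using e m unfolding u_def by simp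
    show "x = y" using mod_mult_div_eq[of x "int n"] mod_mult_div_eq[of y "int n"] m m2 by linarith
  qed
  have surj: "surj u"
  proof -
    { fix y
      have "y mod int n \<in> {0..<int n}" using N by simp
      then have "y mod int n \<in> (\<lambda>r. w r mod int n) ` {0..<int n}" using bij_betw_imp_surj_on[OF rb] by simp
      then obtain r where r: "r \<in> {0..<int n}" "w r mod int n = y mod int n" by (auto elim!: imageE)
      have ar: "a r mod int n = y mod int n" using r ares by simp
      define x where "x = r + int n * ((y - a r) div int n)"
      have "x mod int n = r" unfolding x_def using r by (simp only: mod_mult_self2) simp
      moreover have "x div int n = (y - a r) div int n" unfolding x_def using r N by simp
      ultimately have "u x = a r + int n * ((y - a r) div int n)" unfolding u_def by simp
      also have "\<dots> = y" using modeq_form[OF ar] by simp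
      finally have "y \<in> range u" by (metis rangeI) }
    then show ?thesis by blast
  qed
  have "(\<Sum>r\<in>{0..<int n}. u r) = (\<Sum>r\<in>{0..<int n}. a r)"
    by (rule sum.cong) (auto simp: u_def)
  also have "\<dots> = (\<Sum>r\<in>{0..<int n}. w r) + (\<Sum>r\<in>{0..<int n}. (if r = 0 then D else 0))"
    unfolding a_def by (simp add: sum.distrib)
  also have "\<dots> = (\<Sum>r\<in>{0..<int n}. r)" using N unfolding D_def by simp
  finally have su: "(\<Sum>r\<in>{0..<int n}. u r) = (\<Sum>r\<in>{0..<int n}. r)" .
  have uin: "u \<in> carrier (affS n)" unfolding affS_iff[OF n1] using inj surj pu su bij_def by blast
  have "phiRed n k u = w"
  proof
    fix x
    have "phiRed n k u x = (w (x mod int n) + int n * (x div int n) + (if x mod int n = 0 then D else 0)) mod int (k*n)"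
      unfolding phiRed_def u_def a_def by (simp add: algebra_simps)
    also have "\<dots> = (w (x mod int n) + int n * (x div int n)) mod int (k*n)"
      using MD by (cases "x mod int n = 0") (auto elim!: dvdE)
    also have "\<dots> = w x" by (rule Wclosed[OF n1 k1 w, of x, symmetric])
    finally show "phiRed n k u x = w x" .
  qed
  then show ?thesis using uin by blast
qed

end



context
  fixes n k :: nat
  assumes n1: "n \<ge> 1" and k1: "k \<ge> 1"
begin

lemma affSk_group: "group (affSk n k)"
proof -
  interpret G: group "affS n" by (rule affS_group[OF n1])
  note surj = phi_surj[OF n1 k1]
  show ?thesis
  proof (rule groupI)
    fix x y assume "x \<in> carrier (affSk n k)" "y \<in> carrier (affSk n k)"
    then obtain u v where uv: "u \<in> carrier (affS n)" "v \<in> carrier (affS n)" "phiRed n k u = x" "phiRed n k v = y"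
      using surj by metis
    have "u \<otimes>\<^bsub>affS n\<^esub> v \<in> carrier (affS n)" using uv by simp
    then have "u \<circ> v \<in> carrier (affS n)" by (simp add: affS_def)
    then have "phiRed n k (u \<circ> v) \<in> carrier (affSk n k)" by (rule phi_in[OF n1 k1])
    then show "x \<otimes>\<^bsub>affSk n k\<^esub> y \<in> carrier (affSk n k)"
      using phi_comp[OF n1 k1 uv(1,2)] uv by (simp add: affSk_def)
  next
    have "phiRed n k id \<in> carrier (affSk n k)"
      using phi_in[OF n1 k1, of id] G.one_closed by (simp add: affS_def)
    then show "\<one>\<^bsub>affSk n k\<^esub> \<in> carrier (affSk n k)" using phi_one[OF n1 k1] by simp
  next
    fix x y z show "x \<otimes>\<^bsub>affSk n k\<^esub> y \<otimes>\<^bsub>affSk n k\<^esub> z = x \<otimes>\<^bsub>affSk n k\<^esub> (y \<otimes>\<^bsub>affSk n k\<^esub> z)"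
      by (simp add: affSk_def comp_assoc)
  next
    fix x assume x: "x \<in> carrier (affSk n k)"
    show "\<one>\<^bsub>affSk n k\<^esub> \<otimes>\<^bsub>affSk n k\<^esub> x = x"
    proof -
      have "\<And>y. x y mod int (k*n) = x y" using Wmod[OF n1 k1 x] .
      then show ?thesis by (simp add: affSk_def comp_def)
    qed
  next
    fix x assume "x \<in> carrier (affSk n k)"
    then obtain u where u: "u \<in> carrier (affS n)" "phiRed n k u = x" using surj by metis
    define v where "v = inv\<^bsub>affS n\<^esub> u"
    have v1: "v \<in> carrier (affS n)" unfolding v_def using u(1) by simp
    have "v \<otimes>\<^bsub>affS n\<^esub> u = \<one>\<^bsub>affS n\<^esub>" unfolding v_def using u(1) by simp
    then have "v \<circ> u = id" by (simp add: affS_def)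
    note v = v1 this
    have "phiRed n k v \<in> carrier (affSk n k)" by (rule phi_in[OF n1 k1 v(1)])
    moreover have "phiRed n k v \<otimes>\<^bsub>affSk n k\<^esub> x = \<one>\<^bsub>affSk n k\<^esub>"
      using phi_comp[OF n1 k1 v(1) u(1)] v(2) u(2) phi_one[OF n1 k1] by (simp add: affSk_def)
    ultimately show "\<exists>y\<in>carrier (affSk n k). y \<otimes>\<^bsub>affSk n k\<^esub> x = \<one>\<^bsub>affSk n k\<^esub>" by blast
  qed
qed

lemma phi_hom: "phiRed n k \<in> hom (affS n) (affSk n k)"
proof (rule homI)
  fix x assume "x \<in> carrier (affS n)" then show "phiRed n k x \<in> carrier (affSk n k)" by (rule phi_in[OF n1 k1])
next
  fix x y assume "x \<in> carrier (affS n)" "y \<in> carrier (affS n)"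
  then show "phiRed n k (x \<otimes>\<^bsub>affS n\<^esub> y) = phiRed n k x \<otimes>\<^bsub>affSk n k\<^esub> phiRed n k y"
    using phi_comp[OF n1 k1] by (simp add: affS_def affSk_def)
qed

lemma phi_iso: "(affS n) Mod (kernel (affS n) (affSk n k) (phiRed n k)) \<cong> affSk n k"
proof -
  have gh: "group_hom (affS n) (affSk n k) (phiRed n k)"
    unfolding group_hom_def group_hom_axioms_def using affS_group[OF n1] affSk_group phi_hom by blast
  have "phiRed n k ` carrier (affS n) = carrier (affSk n k)"
    using phi_in[OF n1 k1] phi_surj[OF n1 k1] by blast
  then show ?thesis by (rule group_hom.FactGroup_iso[OF gh])
qed

end



lemma div_pred: assumes "(N::int) > 0" "z mod N \<noteq> 0" shows "(z - 1) div N = z div N"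
proof -
  have e: "z - 1 = (z mod N - 1) + N * (z div N)" using mod_mult_div_eq[of z N] by linarith
  have "0 \<le> z mod N" "z mod N < N" using assms(1) by simp_all
  then have r: "0 \<le> z mod N - 1" "z mod N - 1 < N" using assms(2) by linarith+
  have "(z - 1) div N = (z mod N - 1) div N + z div N" unfolding e using assms(1) by simp
  also have "(z mod N - 1) div N = 0" using r by (simp add: div_pos_pos_trivial)
  finally show ?thesis by simp
qed

lemma small_dvd_eq: assumes "a \<in> {0..<N}" "b \<in> {0..<(N::int)}" "N dvd a - b" shows "a = b"
proof -
  obtain t where "a - b = N * t" using assms(3) by (auto elim: dvdE)
  then have "a = b + N * t" by simp
  then have "t = 0" using assms(1,2) small_mult_zero by blast
  then show ?thesis using \<open>a = b + N * t\<close> by simp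
qed

context
  fixes n k :: nat
  assumes n2: "n \<ge> 2" and k1: "k \<ge> 1"
begin

lemma n1: "n \<ge> 1" using n2 by simp
lemma Npos: "int n > 0" using n2 by simp

lemma J_ne: assumes "j < n" shows "(int j + 1) mod int n \<noteq> int j"
proof
  assume a: "(int j + 1) mod int n = int j"
  have "int j mod int n = int j" using assms by simp
  then have "(int j + 1) mod int n = int j mod int n" using a by simp
  then have "int n dvd 1" unfolding mod_eq_dvd_iff by simp
  then show False using n2 by simp
qed

lemma sg_simp: assumes "j < n"
  shows "x mod int n = int j \<Longrightarrow> sgen n j x = x + 1"
    and "x mod int n = (int j + 1) mod int n \<Longrightarrow> sgen n j x = x - 1"
    and "x mod int n \<noteq> int j \<Longrightarrow> x mod int n \<noteq> (int j + 1) mod int n \<Longrightarrow> sgen n j x = x"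
  using assms J_ne[OF assms] unfolding sgen_def by auto

lemma sg_invol: assumes "j < n" shows "sgen n j (sgen n j x) = x"
proof -
  note s = sg_simp[OF assms]
  note ne = J_ne[OF assms]
  show ?thesis
  proof (cases "x mod int n = int j")
    case True
    have "(x + 1) mod int n = (int j + 1) mod int n" using True by (metis mod_add_left_eq)
    then show ?thesis using s(1)[OF True] s(2) by simp
  next
    case F1: False
    show ?thesis
    proof (cases "x mod int n = (int j + 1) mod int n")
      case True
      have "(x - 1) mod int n = int j mod int n" using True by (metis add_diff_eq diff_add_cancel mod_diff_left_eq)
      also have "\<dots> = int j" using assms by simp
      finally show ?thesis using s(2)[OF True] s(1) by simp
    next
      case False then show ?thesis using s(3) F1 by simp
    qed
  qed
qed

lemma sg_per: "per (int n) (sgen n j)"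
  unfolding per_def sgen_def by simp

lemma sg_sum: assumes "j < n" shows "(\<Sum>r\<in>{0..<int n}. sgen n j r) = (\<Sum>r\<in>{0..<int n}. r)"
proof -
  note ne = J_ne[OF assms]
  have "(\<Sum>r\<in>{0..<int n}. sgen n j r) = (\<Sum>r\<in>{0..<int n}. r + ((if r = int j then 1 else 0) - (if r = (int j + 1) mod int n then 1 else 0)))"
  proof (rule sum.cong)
    fix r assume "r \<in> {0..<int n}"
    then have "r mod int n = r" by simp
    then show "sgen n j r = r + ((if r = int j then 1 else 0) - (if r = (int j + 1) mod int n then 1 else 0))"
      unfolding sgen_def using ne assms by auto
  qed simp
  also have "\<dots> = (\<Sum>r\<in>{0..<int n}. r) + ((\<Sum>r\<in>{0..<int n}. (if r = int j then 1 else 0)) - (\<Sum>r\<in>{0..<int n}. (if r = (int j + 1) mod int n then 1 else 0)))"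
    by (simp add: sum.distrib sum_subtractf)
  also have "(\<Sum>r\<in>{0..<int n}. (if r = int j then 1 else 0)) = (1::int)" using assms by simp
  also have "(\<Sum>r\<in>{0..<int n}. (if r = (int j + 1) mod int n then 1 else 0)) = (1::int)" using Npos by simp
  finally show ?thesis by simp
qed

lemma sg_comp: assumes "j < n" shows "sgen n j \<circ> sgen n j = id"
  using sg_invol[OF assms] by auto

lemma sg_in: assumes "j < n" shows "sgen n j \<in> carrier (affS n)"
proof -
  have "bij (sgen n j)" using sg_invol[OF assms] by (metis bijI' )
  then show ?thesis unfolding affS_iff[OF n1] using sg_per sg_sum[OF assms] by blast
qed

definition blk :: "nat \<Rightarrow> int \<Rightarrow> int" where "blk i x = (x - int i - 1) div int n"

lemma sg_blk: assumes "j < n" "i < n" "j \<noteq> i" shows "blk i (sgen n j x) = blk i x"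
proof -
  note s = sg_simp[OF assms(1)]
  have ij: "\<not> int n dvd int j - int i"
  proof
    assume "int n dvd int j - int i"
    then have "int j = int i" using small_dvd_eq[of "int j" "int n" "int i"] assms by simp
    then show False using assms by simp
  qed
  show ?thesis
  proof (cases "x mod int n = int j")
    case True
    have "(x - int i) mod int n \<noteq> 0"
    proof
      assume "(x - int i) mod int n = 0"
      then have "int n dvd x - int i" by auto
      moreover have "int n dvd x - int j" using True by (metis mod_eq_dvd_iff mod_mod_trivial)
      ultimately have "int n dvd (x - int i) - (x - int j)" by (rule dvd_diff)
      then show False using ij by (simp add: dvd_diff_commute)
    qed
    then have "((x - int i) - 1) div int n = (x - int i) div int n" using div_pred[OF Npos] by blast
    then show ?thesis unfolding blk_def s(1)[OF True] by (simp add: algebra_simps)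
  next
    case F1: False
    show ?thesis
    proof (cases "x mod int n = (int j + 1) mod int n")
      case True
      have "(x - int i - 1) mod int n \<noteq> 0"
      proof
        assume "(x - int i - 1) mod int n = 0"
        then have "int n dvd x - int i - 1" by auto
        moreover have "int n dvd x - (int j + 1)" using True by (metis mod_eq_dvd_iff)
        ultimately have "int n dvd (x - int i - 1) - (x - (int j + 1))" by (rule dvd_diff)
        then show False using ij by (simp add: dvd_diff_commute)
      qed
      then have "((x - int i - 1) - 1) div int n = (x - int i - 1) div int n" using div_pred[OF Npos] by blast
      then show ?thesis unfolding blk_def s(2)[OF True] by (simp add: algebra_simps)
    next
      case False then show ?thesis using s(3) F1 by simp
    qed
  qed
qed

lemma Kpar_blk: assumes "i < n" "u \<in> Kpar n i" shows "blk i (u x) = blk i x"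
proof -
  interpret G: group "affS n" by (rule affS_group[OF n1])
  have "\<forall>x. blk i (u x) = blk i x" using assms(2) unfolding Kpar_def
  proof (induction rule: generate.induct)
    case one then show ?case by (simp add: affS_def)
  next
    case (incl h) then show ?case using sg_blk assms(1) by auto
  next
    case (inv h)
    then obtain j where j: "h = sgen n j" "j < n" "j \<noteq> i" by auto
    have "inv\<^bsub>affS n\<^esub> h = h"
      using G.inv_equality[of h h] sg_in[OF j(2)] sg_comp[OF j(2)] j(1) by (simp add: affS_def)
    then show ?case using j sg_blk assms(1) by auto
  next
    case (eng h1 h2) then show ?case by (simp add: affS_def)
  qed
  then show ?thesis by blast
qed

lemma kernel_Kpar: assumes "i < n" shows "kernel (affS n) (affSk n k) (phiRed n k) \<inter> Kpar n i = {\<one>\<^bsub>affS n\<^esub>}"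
proof
  show "{\<one>\<^bsub>affS n\<^esub>} \<subseteq> kernel (affS n) (affSk n k) (phiRed n k) \<inter> Kpar n i"
  proof -
    interpret G: group "affS n" by (rule affS_group[OF n1])
    have "\<one>\<^bsub>affS n\<^esub> \<in> Kpar n i" unfolding Kpar_def by (rule generate.one)
    moreover have "\<one>\<^bsub>affS n\<^esub> \<in> kernel (affS n) (affSk n k) (phiRed n k)"
    proof -
      have e: "\<one>\<^bsub>affS n\<^esub> = id" by (simp add: affS_def)
      have "id \<in> carrier (affS n)" using G.one_closed unfolding e .
      then show ?thesis unfolding kernel_def e using phi_one[OF n1 k1] by blast
    qed
    ultimately show ?thesis by blast
  qed
next
  show "kernel (affS n) (affSk n k) (phiRed n k) \<inter> Kpar n i \<subseteq> {\<one>\<^bsub>affS n\<^esub>}"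
  proof
    fix u assume u: "u \<in> kernel (affS n) (affSk n k) (phiRed n k) \<inter> Kpar n i"
    then have ph: "phiRed n k u = (\<lambda>x. x mod int (k*n))" unfolding kernel_def by (simp add: affSk_def)
    have le: "int n * 1 \<le> int n * int k" using k1 by (intro mult_left_mono) auto
    have "u x = x" for x
    proof -
      define a where "a = u x - int i - 1"
      define b where "b = x - int i - 1"
      have d: "a div int n = b div int n" using Kpar_blk[OF assms, of u x] u unfolding a_def b_def blk_def by blast
      have "u x mod int (k*n) = x mod int (k*n)" using ph unfolding phiRed_def by meson
      then have "int (k*n) dvd u x - x" by (simp add: mod_eq_dvd_iff)
      moreover have "u x - x = a mod int n - b mod int n"
      proof -
        have d2: "int n * (a div int n) = int n * (b div int n)" using d by simp
        have "u x - x = a - b" unfolding a_def b_def by simp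
        then show ?thesis using mod_mult_div_eq[of a "int n"] mod_mult_div_eq[of b "int n"] d2 by linarith
      qed
      ultimately have dv: "int (k*n) dvd a mod int n - b mod int n" by simp
      have le2: "int n \<le> int (k*n)" using le by (simp only: of_nat_mult mult_1_right mult.commute)
      have "a mod int n < int (k*n)" "b mod int n < int (k*n)"
        using pos_mod_bound[OF Npos, of a] pos_mod_bound[OF Npos, of b] le2 by linarith+
      then have "a mod int n \<in> {0..<int (k*n)}" "b mod int n \<in> {0..<int (k*n)}"
        using pos_mod_sign[OF Npos, of a] pos_mod_sign[OF Npos, of b] by (simp_all only: atLeastLessThan_iff)
      then have "a mod int n = b mod int n" using small_dvd_eq dv by blast
      then show "u x = x" using \<open>u x - x = a mod int n - b mod int n\<close> by simp
    qed
    then have "u = id" by auto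
    then show "u \<in> {\<one>\<^bsub>affS n\<^esub>}" by (simp add: affS_def)
  qed
qed

end



definition mmf :: "nat \<Rightarrow> nat \<Rightarrow> (int \<Rightarrow> int) \<Rightarrow> int \<Rightarrow> int" where
  "mmf n k m r = (if r < int n - 1 then m r else (- (\<Sum>i\<in>{0..<int n - 1}. m i)) mod int k)"
definition ff :: "nat \<Rightarrow> nat \<Rightarrow> (int \<Rightarrow> int) \<times> (int \<Rightarrow> int) \<Rightarrow> int \<Rightarrow> int" where
  "ff n k pm r = fst pm r + int n * mmf n k (snd pm) r"
definition Gm :: "nat \<Rightarrow> nat \<Rightarrow> (int \<Rightarrow> int) \<times> (int \<Rightarrow> int) \<Rightarrow> int \<Rightarrow> int" where
  "Gm n k pm = (\<lambda>x. (ff n k pm (x mod int n) + int n * (x div int n)) mod int (k*n))"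
definition Fm :: "nat \<Rightarrow> (int \<Rightarrow> int) \<Rightarrow> (int \<Rightarrow> int) \<times> (int \<Rightarrow> int)" where
  "Fm n w = ((\<lambda>r. if r \<in> {0..<int n} then w r mod int n else r), restrict (\<lambda>i. w i div int n) {0..<int n - 1})"
definition PP :: "nat \<Rightarrow> (int \<Rightarrow> int) set" where "PP n = {p. p permutes {0..<int n}}"
definition MM :: "nat \<Rightarrow> nat \<Rightarrow> (int \<Rightarrow> int) set" where "MM n k = PiE {0..<int n - 1} (\<lambda>_. {0..<int k})"

context
  fixes n k :: nat
  assumes n2: "n \<ge> 2" and k1: "k \<ge> 1"
begin

lemma Kpos: "int k > 0" using k1 by simp
lemma NK: "int (k*n) = int n * int k" by simp

lemma mm_range: assumes "m \<in> MM n k" "r \<in> {0..<int n}" shows "mmf n k m r \<in> {0..<int k}"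
proof (cases "r < int n - 1")
  case True
  then have "r \<in> {0..<int n - 1}" using assms(2) by simp
  then show ?thesis using assms(1) True unfolding MM_def mmf_def by (auto simp: PiE_iff)
next
  case False then show ?thesis unfolding mmf_def using Kpos by simp
qed

lemma ff_props: assumes "p \<in> PP n" "m \<in> MM n k" "r \<in> {0..<int n}"
  shows "ff n k (p, m) r \<in> {0..<int (k*n)}" "ff n k (p, m) r mod int n = p r"
    "ff n k (p, m) r div int n = mmf n k m r"
proof -
  have pr: "p r \<in> {0..<int n}" using permutes_in_image[of p "{0..<int n}" r] assms(1,3) unfolding PP_def by simp
  have c: "mmf n k m r \<in> {0..<int k}" by (rule mm_range[OF assms(2,3)])
  have "int n * mmf n k m r \<le> int n * (int k - 1)" using c Npos[OF n2 k1] by (intro mult_left_mono) auto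
  moreover have "int n * (int k - 1) = int (k*n) - int n" by (simp add: algebra_simps)
  moreover have "0 \<le> int n * mmf n k m r" using c by simp
  ultimately have "0 \<le> p r + int n * mmf n k m r" "p r + int n * mmf n k m r < int (k*n)"
    using pr by (simp_all only: atLeastLessThan_iff) linarith+
  then show "ff n k (p, m) r \<in> {0..<int (k*n)}" unfolding ff_def by simp
  show "ff n k (p, m) r mod int n = p r" unfolding ff_def using pr by (simp only: fst_conv snd_conv mod_mult_self2) simp
  show "ff n k (p, m) r div int n = mmf n k m r" unfolding ff_def using pr Npos[OF n2 k1]
    by (simp only: fst_conv snd_conv div_mult_self2) simp
qed

lemma Gm_small: assumes "p \<in> PP n" "m \<in> MM n k" "r \<in> {0..<int n}"
  shows "Gm n k (p, m) r = ff n k (p, m) r"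
proof -
  have "r mod int n = r" "r div int n = 0" using assms(3) by auto
  then show ?thesis unfolding Gm_def using ff_props(1)[OF assms] by simp
qed


lemma ff_sum: assumes "p \<in> PP n" "m \<in> MM n k"
  shows "(\<Sum>r\<in>{0..<int n}. ff n k (p, m) r) mod int (k*n) = (\<Sum>r\<in>{0..<int n}. r) mod int (k*n)"
proof -
  have sp: "(\<Sum>r\<in>{0..<int n}. p r) = (\<Sum>r\<in>{0..<int n}. r)"
    using sum.reindex_bij_betw[OF permutes_imp_bij[of p "{0..<int n}"], of "\<lambda>x. x"] assms(1)
    unfolding PP_def by simp
  have sets: "{0..<int n} = insert (int n - 1) {0..<int n - 1}" "int n - 1 \<notin> {0..<int n - 1}"
    using n2 by auto
  have "(\<Sum>r\<in>{0..<int n}. mmf n k m r) = mmf n k m (int n - 1) + (\<Sum>r\<in>{0..<int n - 1}. mmf n k m r)"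
    unfolding sets(1) using sets(2) by simp
  also have "(\<Sum>r\<in>{0..<int n - 1}. mmf n k m r) = (\<Sum>r\<in>{0..<int n - 1}. m r)"
    by (rule sum.cong) (auto simp: mmf_def)
  also have "mmf n k m (int n - 1) = (- (\<Sum>i\<in>{0..<int n - 1}. m i)) mod int k"
    unfolding mmf_def by simp
  finally have "(\<Sum>r\<in>{0..<int n}. mmf n k m r) = (- (\<Sum>i\<in>{0..<int n - 1}. m i)) mod int k + (\<Sum>i\<in>{0..<int n - 1}. m i)" .
  moreover
  { fix S :: int
    have "((- S) mod int k) mod int k = (- S) mod int k" by simp
    then have "int k dvd (- S) mod int k - (- S)" by (simp only: mod_eq_dvd_iff)
    then have "int k dvd (- S) mod int k + S" by simp }
  ultimately have "int k dvd (\<Sum>r\<in>{0..<int n}. mmf n k m r)" by metis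
  then obtain c where c: "(\<Sum>r\<in>{0..<int n}. mmf n k m r) = int k * c" by (auto elim: dvdE)
  have "(\<Sum>r\<in>{0..<int n}. ff n k (p, m) r) = (\<Sum>r\<in>{0..<int n}. p r) + int n * (\<Sum>r\<in>{0..<int n}. mmf n k m r)"
    unfolding ff_def by (simp add: sum.distrib sum_distrib_left)
  also have "\<dots> = (\<Sum>r\<in>{0..<int n}. r) + int (k*n) * c" using sp c by simp
  finally show ?thesis by (simp only: mod_mult_self2)
qed


lemma divN_range: assumes "x \<in> {0..<int (k*n)}" shows "x div int n \<in> {0..<int k}"
proof -
  have N: "int n > 0" using n2 by simp
  have "0 \<le> x" using assms by simp
  then have "0 div int n \<le> x div int n" using N by (rule zdiv_mono1)
  then have "0 \<le> x div int n" by simp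
  moreover have "x div int n < int k"
  proof (rule ccontr)
    assume "\<not> x div int n < int k"
    then have "int n * int k \<le> int n * (x div int n)" using N by (intro mult_left_mono) auto
    moreover have "0 \<le> x mod int n" using N by simp
    ultimately have "int n * int k \<le> x" using mod_mult_div_eq[of x "int n"] by linarith
    then show False using assms by (simp add: mult.commute)
  qed
  ultimately show ?thesis by simp
qed

lemma Gm_in: assumes p: "p \<in> PP n" and m: "m \<in> MM n k" shows "Gm n k (p, m) \<in> carrier (affSk n k)"
proof -
  define f where "f = ff n k (p, m)"
  define g where "g = Gm n k (p, m)"
  have N: "int n > 0" using n2 by simp
  have M: "int (k*n) > 0" using n2 k1 by simp
  have gdef: "g x = (f (x mod int n) + int n * (x div int n)) mod int (k*n)" for x
    unfolding g_def f_def Gm_def by simp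
  have fp: "f r \<in> {0..<int (k*n)}" "f r mod int n = p r" if "r \<in> {0..<int n}" for r
    using ff_props[OF p m that] unfolding f_def by auto
  have modin: "x mod int n \<in> {0..<int n}" for x using N by simp
  have a: "\<forall>x. g x = g (x mod int (k*n))"
  proof
    fix x
    define y where "y = x mod int (k*n)"
    define q where "q = x div int (k*n)"
    have x: "x = y + int n * (int k * q)" unfolding y_def q_def using mod_mult_div_eq[of x "int (k*n)"]
      by (simp add: algebra_simps)
    have "x mod int n = y mod int n" unfolding x by (simp only: mod_mult_self2)
    moreover have "x div int n = int k * q + y div int n" unfolding x using N by (simp only: div_mult_self2)
    ultimately have "g x = ((f (y mod int n) + int n * (y div int n)) + int (k*n) * q) mod int (k*n)"
      unfolding gdef by (simp add: algebra_simps)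
    also have "\<dots> = g y" unfolding gdef by (simp only: mod_mult_self2)
    finally show "g x = g (x mod int (k*n))" unfolding y_def .
  qed
  have inj: "inj_on g {0..<int (k*n)}"
  proof (rule inj_onI)
    fix x y assume xy: "x \<in> {0..<int (k*n)}" "y \<in> {0..<int (k*n)}" and e: "g x = g y"
    have dvdNM: "int n dvd int (k*n)" by simp
    have gm: "g z mod int n = p (z mod int n)" for z
    proof -
      have "g z mod int n = (f (z mod int n) + int n * (z div int n)) mod int n"
        unfolding gdef using mod_mod_cancel[OF dvdNM] by blast
      also have "\<dots> = f (z mod int n) mod int n" by (simp only: mod_mult_self2)
      also have "\<dots> = p (z mod int n)" using fp(2)[OF modin] .
      finally show ?thesis .
    qed
    have "p (x mod int n) = p (y mod int n)" using e gm by metis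
    then have r: "x mod int n = y mod int n" using permutes_inj[of p "{0..<int n}"] p unfolding PP_def inj_def by blast
    define c where "c = f (x mod int n)"
    have "(c + int n * (x div int n)) mod int (k*n) = (c + int n * (y div int n)) mod int (k*n)"
      using e unfolding gdef c_def r .
    then have "int (k*n) dvd (c + int n * (x div int n)) - (c + int n * (y div int n))"
      by (simp only: mod_eq_dvd_iff)
    then have "int n * int k dvd int n * (x div int n - y div int n)" by (simp add: algebra_simps)
    then have "int k dvd x div int n - y div int n" using N by simp
    then have "x div int n = y div int n" using small_dvd_eq divN_range xy by blast
    then show "x = y" using r mod_mult_div_eq[of x "int n"] mod_mult_div_eq[of y "int n"] by metis
  qed
  have "g ` {0..<int (k*n)} \<subseteq> {0..<int (k*n)}" unfolding gdef using M by auto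
  then have "g ` {0..<int (k*n)} = {0..<int (k*n)}" using endo_inj_surj[OF _ _ inj] by simp
  then have b: "bij_betw g {0..<int (k*n)} {0..<int (k*n)}" using inj by (simp add: bij_betw_def)
  have c: "\<forall>j. g (j + int n) = (g j + int n) mod int (k*n)"
  proof
    fix j
    have "(j + int n) mod int n = j mod int n" by simp
    moreover have "(j + int n) div int n = j div int n + 1" using N by simp
    ultimately have "g (j + int n) = (f (j mod int n) + int n * (j div int n) + int n) mod int (k*n)"
      unfolding gdef by (simp add: algebra_simps)
    also have "\<dots> = (g j + int n) mod int (k*n)" unfolding gdef by (simp add: mod_add_left_eq)
    finally show "g (j + int n) = (g j + int n) mod int (k*n)" .
  qed
  have d: "(\<Sum>i=1..int n. g i) mod int (k*n) = int ((n + 1) choose 2) mod int (k*n)"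
  proof -
    define h where "h i = f (i mod int n) + int n * (i div int n)" for i
    have ph: "per (int n) h" unfolding per_def h_def using N by (simp add: distrib_left)
    have "(\<Sum>i=1..int n. g i) mod int (k*n) = (\<Sum>i=1..int n. h i mod int (k*n)) mod int (k*n)"
      unfolding gdef h_def by simp
    also have "\<dots> = (\<Sum>i=1..int n. h i) mod int (k*n)" by (simp add: mod_sum_eq)
    also have "(\<Sum>i=1..int n. h i) = (\<Sum>r\<in>{0..<int n}. h r) + int n"
      using per_shift_sum[OF ph] n2 by simp
    also have "(\<Sum>r\<in>{0..<int n}. h r) = (\<Sum>r\<in>{0..<int n}. f r)"
      by (rule sum.cong) (auto simp: h_def)
    also have "((\<Sum>r\<in>{0..<int n}. f r) + int n) mod int (k*n) = ((\<Sum>r\<in>{0..<int n}. f r) mod int (k*n) + int n) mod int (k*n)"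
      by (simp add: mod_add_left_eq)
    also have "(\<Sum>r\<in>{0..<int n}. f r) mod int (k*n) = (\<Sum>r\<in>{0..<int n}. r) mod int (k*n)"
      unfolding f_def by (rule ff_sum[OF p m])
    also have "((\<Sum>r\<in>{0..<int n}. r) mod int (k*n) + int n) mod int (k*n) = int ((n + 1) choose 2) mod int (k*n)"
      using sum_range_int[of n] choose_Suc2[of n] by (simp add: mod_add_left_eq)
    finally show ?thesis .
  qed
  show ?thesis unfolding g_def[symmetric] affSk_def using a b c d by simp
qed


lemma n1': "n \<ge> 1" using n2 by simp

lemma Fm_in: assumes w: "w \<in> carrier (affSk n k)" shows "Fm n w \<in> PP n \<times> MM n k"
proof -
  have N: "int n > 0" using n2 by simp
  have "bij_betw (\<lambda>r. if r \<in> {0..<int n} then w r mod int n else r) {0..<int n} {0..<int n}"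
    using Wres_bij[OF n1' k1 w] by (rule bij_betw_cong[THEN iffD1, rotated]) simp
  then have "(\<lambda>r. if r \<in> {0..<int n} then w r mod int n else r) permutes {0..<int n}"
    by (rule bij_imp_permutes) auto
  moreover have "restrict (\<lambda>i. w i div int n) {0..<int n - 1} \<in> MM n k"
    unfolding MM_def restrict_PiE_iff using divN_range Wrange[OF n1' k1 w] by blast
  ultimately show ?thesis unfolding Fm_def PP_def by simp
qed

lemma last_digit: assumes w: "w \<in> carrier (affSk n k)"
  shows "(- (\<Sum>i\<in>{0..<int n - 1}. w i div int n)) mod int k = w (int n - 1) div int n"
proof -
  have N: "int n > 0" using n2 by simp
  have sr: "(\<Sum>r\<in>{0..<int n}. w r mod int n) = (\<Sum>r\<in>{0..<int n}. r)"
    using sum.reindex_bij_betw[OF Wres_bij[OF n1' k1 w], of "\<lambda>x. x"] by simp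
  have "(\<Sum>r\<in>{0..<int n}. w r) = (\<Sum>r\<in>{0..<int n}. w r mod int n + int n * (w r div int n))"
    by (rule sum.cong) simp_all
  also have "\<dots> = (\<Sum>r\<in>{0..<int n}. r) + int n * (\<Sum>r\<in>{0..<int n}. w r div int n)"
    by (simp only: sum.distrib sr sum_distrib_left)
  finally have e: "(\<Sum>r\<in>{0..<int n}. w r) = (\<Sum>r\<in>{0..<int n}. r) + int n * (\<Sum>r\<in>{0..<int n}. w r div int n)" .
  have "int (k*n) dvd (\<Sum>r\<in>{0..<int n}. w r) - (\<Sum>r\<in>{0..<int n}. r)"
    using Wsum[OF n1' k1 w] by (simp only: mod_eq_dvd_iff)
  then have "int n * int k dvd int n * (\<Sum>r\<in>{0..<int n}. w r div int n)" using e by (simp add: algebra_simps)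
  then have kd: "int k dvd (\<Sum>r\<in>{0..<int n}. w r div int n)" using N by simp
  have sets: "{0..<int n} = insert (int n - 1) {0..<int n - 1}" "int n - 1 \<notin> {0..<int n - 1}"
    using n2 by auto
  have "(\<Sum>r\<in>{0..<int n}. w r div int n) = w (int n - 1) div int n + (\<Sum>r\<in>{0..<int n - 1}. w r div int n)"
    unfolding sets(1) using sets(2) by simp
  then have "int k dvd w (int n - 1) div int n - (- (\<Sum>i\<in>{0..<int n - 1}. w i div int n))"
    using kd by simp
  then have "(w (int n - 1) div int n) mod int k = (- (\<Sum>i\<in>{0..<int n - 1}. w i div int n)) mod int k"
    by (simp only: mod_eq_dvd_iff)
  moreover have "w (int n - 1) div int n \<in> {0..<int k}" using divN_range Wrange[OF n1' k1 w] by blast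
  ultimately show ?thesis by simp
qed

lemma GF: assumes w: "w \<in> carrier (affSk n k)" shows "Gm n k (Fm n w) = w"
proof
  fix x
  have N: "int n > 0" using n2 by simp
  define r where "r = x mod int n"
  have r: "r \<in> {0..<int n}" unfolding r_def using N by simp
  have "ff n k (Fm n w) r = w r"
  proof (cases "r < int n - 1")
    case True
    then show ?thesis using r unfolding ff_def Fm_def mmf_def by simp
  next
    case False
    then have rr: "r = int n - 1" using r by simp
    have "mmf n k (snd (Fm n w)) r = w r div int n"
      unfolding mmf_def Fm_def using False last_digit[OF w] rr by simp
    then show ?thesis using r unfolding ff_def Fm_def by simp
  qed
  then show "Gm n k (Fm n w) x = w x" unfolding Gm_def r_def[symmetric]
    using Wclosed[OF n1' k1 w, of x] unfolding r_def by simp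
qed

lemma FG: assumes p: "p \<in> PP n" and m: "m \<in> MM n k" shows "Fm n (Gm n k (p, m)) = (p, m)"
proof -
  have "(\<lambda>r. if r \<in> {0..<int n} then Gm n k (p, m) r mod int n else r) = p"
  proof
    fix r show "(if r \<in> {0..<int n} then Gm n k (p, m) r mod int n else r) = p r"
    proof (cases "r \<in> {0..<int n}")
      case True then show ?thesis using Gm_small[OF p m True] ff_props(2)[OF p m True] by simp
    next
      case False then show ?thesis using p permutes_not_in unfolding PP_def by fastforce
    qed
  qed
  moreover have "restrict (\<lambda>i. Gm n k (p, m) i div int n) {0..<int n - 1} = m"
  proof -
    have "restrict (\<lambda>i. Gm n k (p, m) i div int n) {0..<int n - 1} = restrict m {0..<int n - 1}"
    proof (rule restrict_ext)
      fix i assume i: "i \<in> {0..<int n - 1}"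
      then have i2: "i \<in> {0..<int n}" by simp
      show "Gm n k (p, m) i div int n = m i"
        using Gm_small[OF p m i2] ff_props(3)[OF p m i2] i unfolding mmf_def by simp
    qed
    also have "\<dots> = m" using m unfolding MM_def by (rule PiE_restrict)
    finally show ?thesis .
  qed
  ultimately show ?thesis unfolding Fm_def by simp
qed

lemma card_affSk: "card (carrier (affSk n k)) = k ^ (n - 1) * fact n"
proof -
  have "bij_betw (Fm n) (carrier (affSk n k)) (PP n \<times> MM n k)"
  proof (rule bij_betw_byWitness[where f' = "Gm n k"])
    show "\<forall>a\<in>carrier (affSk n k). Gm n k (Fm n a) = a" using GF by blast
    show "\<forall>a'\<in>PP n \<times> MM n k. Fm n (Gm n k a') = a'" using FG by blast
    show "Fm n ` carrier (affSk n k) \<subseteq> PP n \<times> MM n k" using Fm_in by blast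
    show "Gm n k ` (PP n \<times> MM n k) \<subseteq> carrier (affSk n k)" using Gm_in by blast
  qed
  then have "card (carrier (affSk n k)) = card (PP n \<times> MM n k)" by (rule bij_betw_same_card)
  also have "\<dots> = card (PP n) * card (MM n k)" by (rule card_cartesian_product)
  also have "card (PP n) = fact n"
    unfolding PP_def by (rule card_permutations) simp_all
  also have "card (MM n k) = k ^ (n - 1)"
  proof -
    have "card (MM n k) = (\<Prod>i\<in>{0..<int n - 1}. card {0..<int k})" unfolding MM_def by (rule card_PiE) simp
    also have "\<dots> = k ^ (n - 1)" using n2 by (simp add: nat_diff_distrib)
    finally show ?thesis .
  qed
  finally show ?thesis by simp
qed

end


theorem mainTheorem6:
  fixes n k :: nat
  assumes "n \<ge> 2" and "k \<ge> 1"
  shows "group (affSk n k)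
    \<and> phiRed n k \<in> hom (affS n) (affSk n k)
    \<and> (affS n) Mod (kernel (affS n) (affSk n k) (phiRed n k)) \<cong> affSk n k
    \<and> (\<forall>i<n. kernel (affS n) (affSk n k) (phiRed n k) \<inter> Kpar n i = {\<one>\<^bsub>affS n\<^esub>})
    \<and> card (carrier (affSk n k)) = k ^ (n - 1) * fact n"
proof -
  have n1: "n \<ge> 1" using assms(1) by simp
  show ?thesis
    using affSk_group[OF n1 assms(2)] phi_hom[OF n1 assms(2)] phi_iso[OF n1 assms(2)]
      kernel_Kpar[OF assms] card_affSk[OF assms] by blast
qed

end
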